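(* Assume $\delta>d$, $\alpha=\gamma/(\delta-d)$, and that $f$ is not a polynomial product. Then on $\mathbb{C}^2\setminus B_f$ the limits $$G_z^\lambda(w)=\lim_{n\to\infty}\frac{1}{\delta^n}\log^+|Q_z^n(w)|,\qquad G_f(z,w)=\lim_{n\to\infty}\frac{1}{\delta^n}\log^+|f^n(z,w)|$$ exist and satisfy $G_z^\lambda(w)=\alpha G_p(z)$ and $G_f(z,w)=\max\{\alpha,1\}G_p(z)$, where $|(z,w)|=\max\{|z|,|w|\}$.
   Context: Let $p(z)=z^\delta+O(z^{\delta-1})$ be a monic polynomial of degree $\delta\ge 2$, and let $q(z,w)=b(z)w^d+(\text{terms of lower degree in } w)$ be a polynomial with $d=\deg_w q\ge 2$, where $b$ is a monic polynomial of degree $\gamma\ge 0$. Let $f(z,w)=(p(z),q(z,w))$; $f$ is a polynomial product if $q$ does not depend on $z$. Write $Q_z^n=q_{p^{n-1}(z)}\circ\cdots\circ q_{p(z)}\circ q_z$ with $q_z=q(z,\cdot)$, so $f^n(z,w)=(p^n(z),Q_z^n(w))$. Let $A_p=\{z: p^n(z)\to\infty\}$ and $G_p(z)=\lim_n\delta^{-n}\log^+|p^n(z)|$. For $\delta>d$, $\alpha=\max\{n_j/(\delta-m_j)\}$ over monomials $z^{n_j}w^{m_j}$ appearing in $q$ with nonzero coefficient. Let $W_R=\{(z,w):|z|>R,\ |w|>R|z|^\alpha\}$, fix $R$ large enough that $f(W_R)\subset W_R$ and $W_R\subset A_p\times\mathbb{C}$, set $A_f=\bigcup_{n\ge0}f^{-n}(W_R)$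 and $B_f=(A_p\times\mathbb{C})\setminus A_f$. *)

theory Defs
  imports "HOL-Analysis.Analysis" "HOL-Computational_Algebra.Polynomial"
begin

text \<open>The two-variable polynomial q(z,w) is represented as a polynomial in w whose
coefficients are polynomials in z: q = sum_j b_j(z) w^j.\<close>

definition qeval :: "complex poly poly \<Rightarrow> complex \<Rightarrow> complex \<Rightarrow> complex" where
  "qeval q z w = poly (map_poly (\<lambda>a. poly a z) q) w"

definition logplus :: "real \<Rightarrow> real" where
  "logplus x = max 0 (ln x)"

definition fmap :: "complex poly \<Rightarrow> complex poly poly \<Rightarrow> complex \<times> complex \<Rightarrow> complex \<times> complex" where
  "fmap p q = (\<lambda>(z, w). (poly p z, qeval q z w))"

fun Qiter :: "complex poly \<Rightarrow> complex poly poly \<Rightarrow> nat \<Rightarrow> complex \<Rightarrow> complex \<Rightarrow> complex" where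
  "Qiter p q 0 z w = w"
| "Qiter p q (Suc n) z w = qeval q ((poly p ^^ n) z) (Qiter p q n z w)"

text \<open>f is a polynomial product iff q does not depend on z.\<close>
definition poly_product :: "complex poly poly \<Rightarrow> bool" where
  "poly_product q \<longleftrightarrow> (\<forall>m. degree (coeff q m) = 0)"

definition escape_set :: "complex poly \<Rightarrow> complex set" where
  "escape_set p = {z. filterlim (\<lambda>n. (poly p ^^ n) z) at_infinity sequentially}"

definition Green_p :: "complex poly \<Rightarrow> complex \<Rightarrow> real" where
  "Green_p p z = lim (\<lambda>n. logplus (cmod ((poly p ^^ n) z)) / real (degree p) ^ n)"

definition alpha_exp :: "complex poly \<Rightarrow> complex poly poly \<Rightarrow> real" where
  "alpha_exp p q = Max {real n / (real (degree p) - real m) | n m. coeff (coeff q m) n \<noteq> 0}"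

definition W_set :: "real \<Rightarrow> real \<Rightarrow> (complex \<times> complex) set" where
  "W_set \<alpha> R = {(z, w). cmod z > R \<and> cmod w > R * cmod z powr \<alpha>}"

definition A_f :: "complex poly \<Rightarrow> complex poly poly \<Rightarrow> real \<Rightarrow> (complex \<times> complex) set" where
  "A_f p q R = (\<Union>n. (fmap p q ^^ n) -` W_set (alpha_exp p q) R)"

definition B_f :: "complex poly \<Rightarrow> complex poly poly \<Rightarrow> real \<Rightarrow> (complex \<times> complex) set" where
  "B_f p q R = (escape_set p \<times> UNIV) - A_f p q R"

definition maxnorm :: "complex \<times> complex \<Rightarrow> real" where
  "maxnorm zw = max (cmod (fst zw)) (cmod (snd zw))"

end

theory Submission
  imports Defs "HOL-Computational_Algebra.Fundamental_Theorem_Algebra"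
begin


lemma exists_root:
  fixes P :: "complex poly" assumes "degree P > 0" shows "\<exists>z. poly P z = 0"
  using fundamental_theorem_of_algebra constant_degree assms by (metis neq0_conv)

lemma degree_diff_left: "degree (Q::'a::ab_group_add poly) < degree P \<Longrightarrow> degree (P - Q) = degree P"
  using degree_add_eq_left[of "-Q" P] by simp

lemma fixed_orbit: "poly p y = y \<Longrightarrow> (poly p ^^ k) y = y"
  by (induction k) auto

lemma nonzero_bounded_orbit:
  fixes p :: "complex poly"
  assumes "degree p \<ge> 2"
  shows "\<exists>x. x \<noteq> 0 \<and> (\<forall>k. cmod ((poly p ^^ k) x) \<le> cmod x)"
proof (cases "poly p 0 = 0")
  case False
  have "degree (p - [:0,1:]) = degree p"
    by (rule degree_diff_left) (use assms in auto)
  hence "degree (p - [:0,1:]) > 0" using assms by linarith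
  then obtain y where y: "poly (p - [:0,1:]) y = 0" using exists_root by blast
  hence fy: "poly p y = y" by simp
  with False have "y \<noteq> 0" by auto
  thus ?thesis using fixed_orbit[OF fy] by auto
next
  case True
  then obtain r where pr: "p = [:0,1:] * r" using poly_eq_0_iff_dvd[of p 0] by (auto elim: dvdE)
  have "r \<noteq> 0" using pr assms by auto
  hence dr: "degree r = degree p - 1" using pr by (simp add: degree_mult_eq)
  with assms have dr1: "degree r \<ge> 1" by simp
  have "degree r > 0" using dr1 by linarith
  then obtain y1 where y1: "poly r y1 = 0" using exists_root by blast
  have "degree (r - 1) = degree r" by (rule degree_diff_left) (use dr1 in auto)
  hence "degree (r - 1) > 0" using dr1 by linarith
  then obtain y2 where y2: "poly (r - 1) y2 = 0" using exists_root by blast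
  show ?thesis
  proof (cases "y1 = 0")
    case False
    have p0: "poly p y1 = 0" using pr y1 by simp
    have "(poly p ^^ Suc k) y1 = 0" for k
      by (induction k) (use p0 True in auto)
    hence "cmod ((poly p ^^ k) y1) \<le> cmod y1" for k by (cases k) auto
    with False show ?thesis by auto
  next
    case True
    have "poly r y2 = 1" using y2 by simp
    hence "y2 \<noteq> 0" using True y1 by auto
    moreover have "poly p y2 = y2" using pr \<open>poly r y2 = 1\<close> by simp
    ultimately show ?thesis using fixed_orbit[of p y2] by auto
  qed
qed


lemma poly_sum_upto:
  fixes P :: "complex poly"
  assumes "degree P \<le> n" shows "poly P x = (\<Sum>i\<le>n. coeff P i * x^i)"
proof -
  have "(\<Sum>i\<le>degree P. coeff P i * x^i) = (\<Sum>i\<le>n. coeff P i * x^i)"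
    by (rule sum.mono_neutral_left) (use assms in \<open>auto simp: coeff_eq_0\<close>)
  thus ?thesis by (simp add: poly_altdef)
qed

lemma p_growth:
  fixes p :: "complex poly"
  assumes mon: "lead_coeff p = 1" and dg: "degree p \<ge> 2"
  obtains R1 where "R1 \<ge> 4"
    "\<And>x. cmod x \<ge> R1 \<Longrightarrow> cmod x ^ degree p / 2 \<le> cmod (poly p x) \<and> cmod (poly p x) \<le> 2 * cmod x ^ degree p"
proof -
  define \<delta> where "\<delta> = degree p"
  define S where "S = (\<Sum>i<\<delta>. cmod (coeff p i))"
  have S0: "S \<ge> 0" unfolding S_def by (simp add: sum_nonneg)
  have main: "cmod x ^ \<delta> / 2 \<le> cmod (poly p x) \<and> cmod (poly p x) \<le> 2 * cmod x ^ \<delta>"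
    if x: "cmod x \<ge> 2*S+4" for x
  proof -
    have x1: "cmod x \<ge> 1" using x S0 by linarith
    have "poly p x = (\<Sum>i<Suc \<delta>. coeff p i * x^i)"
      unfolding poly_altdef \<delta>_def by (simp add: lessThan_Suc_atMost)
    also have "\<dots> = (\<Sum>i<\<delta>. coeff p i * x^i) + x^\<delta>"
      using mon by (simp add: \<delta>_def)
    finally have px: "poly p x = (\<Sum>i<\<delta>. coeff p i * x^i) + x^\<delta>" .
    have "cmod (\<Sum>i<\<delta>. coeff p i * x^i) \<le> (\<Sum>i<\<delta>. cmod (coeff p i) * cmod x ^ i)"
      by (rule order.trans[OF norm_sum]) (simp add: norm_mult norm_power)
    also have "\<dots> \<le> (\<Sum>i<\<delta>. cmod (coeff p i) * cmod x ^ (\<delta> - 1))"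
      by (rule sum_mono, rule mult_left_mono, rule power_increasing) (use x1 in auto)
    also have "\<dots> = S * cmod x ^ (\<delta> - 1)" unfolding S_def by (simp add: sum_distrib_right)
    also have "\<dots> \<le> (cmod x / 2) * cmod x ^ (\<delta> - 1)"
      by (rule mult_right_mono) (use x in auto)
    also have "\<dots> = cmod x ^ \<delta> / 2"
      using dg unfolding \<delta>_def by (cases "degree p") (auto simp: power_Suc)
    finally have e: "cmod (\<Sum>i<\<delta>. coeff p i * x^i) \<le> cmod x ^ \<delta> / 2" .
    have n: "cmod (x^\<delta>) = cmod x ^ \<delta>" by (simp add: norm_power)
    have "cmod (poly p x) \<ge> cmod (x^\<delta>) - cmod (\<Sum>i<\<delta>. coeff p i * x^i)"
      unfolding px by (metis add.commute norm_diff_ineq)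
    moreover have "cmod (poly p x) \<le> cmod (x^\<delta>) + cmod (\<Sum>i<\<delta>. coeff p i * x^i)"
      unfolding px by (metis add.commute norm_triangle_ineq)
    moreover have "cmod x ^ \<delta> \<ge> 0" by simp
    ultimately show ?thesis using e n by linarith
  qed
  show ?thesis
  proof (rule that[of "2*S+4"])
    show "2*S+4 \<ge> 4" using S0 by linarith
  next
    fix x :: complex assume "cmod x \<ge> 2*S+4"
    thus "cmod x ^ degree p / 2 \<le> cmod (poly p x) \<and> cmod (poly p x) \<le> 2 * cmod x ^ degree p"
      using main unfolding \<delta>_def by blast
  qed
qed

lemma p_double:
  fixes p :: "complex poly"
  assumes "degree p \<ge> 2" "R1 \<ge> 4" "cmod x \<ge> R1"
    and "cmod x ^ degree p / 2 \<le> cmod (poly p x)"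
  shows "cmod (poly p x) \<ge> 2 * cmod x"
proof -
  have "cmod x ^ degree p = cmod x * cmod x * cmod x ^ (degree p - 2)"
    using assms(1) by (metis (no_types, lifting) add_diff_inverse_nat not_less power_add power2_eq_square mult.commute)
  moreover have "cmod x ^ (degree p - 2) \<ge> 1" using assms by (intro one_le_power) auto
  moreover have "cmod x \<ge> 4" using assms by auto
  ultimately have "cmod x ^ degree p \<ge> 4 * cmod x"
  proof -
    assume eq: "cmod x ^ degree p = cmod x * cmod x * cmod x ^ (degree p - 2)"
      and p1: "cmod x ^ (degree p - 2) \<ge> 1" and x4: "cmod x \<ge> 4"
    have "4 * cmod x \<le> cmod x * cmod x" using x4 by (intro mult_right_mono) auto
    also have "\<dots> = (cmod x * cmod x) * 1" by simp
    also have "\<dots> \<le> (cmod x * cmod x) * cmod x ^ (degree p - 2)" using p1 by (intro mult_left_mono) auto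
    finally show ?thesis using eq by simp
  qed
  with assms(4) show ?thesis by linarith
qed


lemma rec_bound:
  fixes x :: "nat \<Rightarrow> real"
  assumes "c \<ge> 0" "d \<ge> 2" "\<And>n. x (Suc n) \<le> c + d * x n"
  shows "x n \<le> d^n * (\<bar>x 0\<bar> + c) - c"
proof (induction n)
  case 0 thus ?case by simp
next
  case (Suc n)
  have "x (Suc n) \<le> c + d * x n" by (rule assms(3))
  also have "\<dots> \<le> c + d * (d^n * (\<bar>x 0\<bar> + c) - c)"
    using Suc assms(2) by (intro add_left_mono mult_left_mono) auto
  also have "\<dots> = d^Suc n * (\<bar>x 0\<bar> + c) - c - (d - 2) * c" by (simp add: algebra_simps)
  also have "\<dots> \<le> d^Suc n * (\<bar>x 0\<bar> + c) - c" using assms by simp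
  finally show ?case .
qed

lemma squeeze_zero:
  fixes x :: "nat \<Rightarrow> real"
  assumes "\<And>n. L \<le> x n" "\<And>n. x n \<le> d^n * A" "0 \<le> d" "d < \<delta>" "\<delta> > 1"
  shows "(\<lambda>n. x n / \<delta>^n) \<longlonglongrightarrow> 0"
proof (rule tendsto_sandwich[where f = "\<lambda>n. L * (1/\<delta>)^n" and h = "\<lambda>n. A * (d/\<delta>)^n"])
  have dp: "\<delta> > 0" using assms by linarith
  show "\<forall>\<^sub>F n in sequentially. L * (1/\<delta>)^n \<le> x n / \<delta>^n"
    using assms(1) dp by (auto simp: power_divide divide_right_mono)
  show "\<forall>\<^sub>F n in sequentially. x n / \<delta>^n \<le> A * (d/\<delta>)^n"
    using assms(2) dp by (auto simp: power_divide divide_right_mono mult.commute)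
  show "(\<lambda>n. L * (1/\<delta>)^n) \<longlonglongrightarrow> 0"
    using assms(5) by (intro tendsto_mult_right_zero LIMSEQ_power_zero) auto
  show "(\<lambda>n. A * (d/\<delta>)^n) \<longlonglongrightarrow> 0"
    using assms dp by (intro tendsto_mult_right_zero LIMSEQ_power_zero) auto
qed

lemma telescope_conv:
  fixes a :: "nat \<Rightarrow> real"
  assumes d1: "\<delta> > 1" and b: "\<And>n. \<bar>a (Suc n) - \<delta> * a n\<bar> \<le> C"
  shows "convergent (\<lambda>n. a n / \<delta>^n)"
proof -
  define g where "g n = a (Suc n) / \<delta>^Suc n - a n / \<delta>^n" for n
  have gb: "norm (g n) \<le> (C/\<delta>) * (1/\<delta>)^n" for n
  proof -
    have "g n = (a (Suc n) - \<delta> * a n) / \<delta>^Suc n" using d1 by (simp add: g_def field_simps)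
    hence "norm (g n) = \<bar>a (Suc n) - \<delta> * a n\<bar> / \<delta>^Suc n" using d1 by simp
    also have "\<dots> \<le> C / \<delta>^Suc n" using b d1 by (intro divide_right_mono) auto
    also have "\<dots> = (C/\<delta>) * (1/\<delta>)^n" by (simp add: power_divide)
    finally show ?thesis .
  qed
  have "summable (\<lambda>n. (C/\<delta>) * (1/\<delta>)^n)"
    using d1 by (intro summable_mult summable_geometric) auto
  hence sg: "summable g" by (rule summable_comparison_test[rotated]) (use gb in auto)
  have eq: "a n / \<delta>^n = a 0 + (\<Sum>i<n. g i)" for n
    unfolding g_def using sum_lessThan_telescope[of "\<lambda>i. a i / \<delta>^i" n] by simp
  have "(\<lambda>n. a 0 + (\<Sum>i<n. g i)) \<longlonglongrightarrow> a 0 + suminf g"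
    by (intro tendsto_add tendsto_const summable_LIMSEQ sg)
  thus ?thesis unfolding eq convergent_def by blast
qed


lemma qeval_sum: "qeval q z w = (\<Sum>m\<le>degree q. poly (coeff q m) z * w^m)"
proof -
  have "degree (map_poly (\<lambda>a. poly a z) q) \<le> degree q"
    by (rule degree_le) (auto simp: coeff_map_poly coeff_eq_0)
  thus ?thesis unfolding qeval_def by (subst poly_sum_upto) (auto simp: coeff_map_poly)
qed

lemma qeval_norm:
  "cmod (qeval q z w) \<le> (\<Sum>m\<le>degree q. \<Sum>n\<le>degree (coeff q m).
      cmod (coeff (coeff q m) n) * (cmod z ^ n * cmod w ^ m))"
proof -
  have "cmod (qeval q z w) \<le> (\<Sum>m\<le>degree q. cmod (poly (coeff q m) z) * cmod w ^ m)"
    unfolding qeval_sum by (rule order.trans[OF norm_sum]) (simp add: norm_mult norm_power)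
  also have "\<dots> \<le> (\<Sum>m\<le>degree q. (\<Sum>n\<le>degree (coeff q m).
      cmod (coeff (coeff q m) n) * cmod z ^ n) * cmod w ^ m)"
  proof (rule sum_mono, rule mult_right_mono)
    fix m
    show "cmod (poly (coeff q m) z) \<le> (\<Sum>n\<le>degree (coeff q m). cmod (coeff (coeff q m) n) * cmod z ^ n)"
      unfolding poly_altdef by (rule order.trans[OF norm_sum]) (simp add: norm_mult norm_power)
  qed simp
  also have "\<dots> = (\<Sum>m\<le>degree q. \<Sum>n\<le>degree (coeff q m).
      cmod (coeff (coeff q m) n) * (cmod z ^ n * cmod w ^ m))"
    by (simp add: sum_distrib_right mult.assoc)
  finally show ?thesis .
qed

lemma q_bound_bounded:
  fixes q :: "complex poly poly"
  assumes "R1 \<ge> 1"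
  obtains B where "B \<ge> 1" "\<And>z w. cmod z \<le> R1 \<Longrightarrow> cmod (qeval q z w) \<le> B * (max 1 (cmod w)) ^ degree q"
proof -
  define B where "B = max 1 (\<Sum>m\<le>degree q. \<Sum>n\<le>degree (coeff q m). cmod (coeff (coeff q m) n) * R1 ^ n)"
  have "cmod (qeval q z w) \<le> B * (max 1 (cmod w)) ^ degree q" if z: "cmod z \<le> R1" for z w
  proof -
    have "cmod (qeval q z w) \<le> (\<Sum>m\<le>degree q. \<Sum>n\<le>degree (coeff q m).
      cmod (coeff (coeff q m) n) * (R1 ^ n * (max 1 (cmod w)) ^ degree q))"
    proof (rule order.trans[OF qeval_norm], intro sum_mono mult_left_mono mult_mono)
      fix m n assume m: "m \<in> {..degree q}"
      show "cmod z ^ n \<le> R1 ^ n" using z by (intro power_mono) auto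
      have "cmod w ^ m \<le> (max 1 (cmod w)) ^ m" by (intro power_mono) auto
      also have "\<dots> \<le> (max 1 (cmod w)) ^ degree q" using m by (intro power_increasing) auto
      finally show "cmod w ^ m \<le> (max 1 (cmod w)) ^ degree q" .
    qed (use assms in auto)
    also have "\<dots> = (\<Sum>m\<le>degree q. \<Sum>n\<le>degree (coeff q m). cmod (coeff (coeff q m) n) * R1 ^ n)
       * (max 1 (cmod w)) ^ degree q"
      by (simp add: sum_distrib_right mult.assoc)
    also have "\<dots> \<le> B * (max 1 (cmod w)) ^ degree q"
      unfolding B_def by (intro mult_right_mono) auto
    finally show ?thesis .
  qed
  thus ?thesis using that[of B] by (auto simp: B_def)
qed

lemma q_bound_W:
  fixes q :: "complex poly poly" and \<alpha> R :: real and \<delta> \<gamma> :: nat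
  assumes R: "R > 0" and z1: "cmod z \<ge> 1" and w: "cmod w > R * cmod z powr \<alpha>"
    and al: "\<alpha> * (real \<delta> - real (degree q)) = real \<gamma>"
    and nb: "\<And>m n. coeff (coeff q m) n \<noteq> 0 \<Longrightarrow> real n \<le> \<alpha> * (real \<delta> - real m)"
  shows "cmod (qeval q z w) \<le> (\<Sum>m\<le>degree q. \<Sum>n\<le>degree (coeff q m).
      cmod (coeff (coeff q m) n) * (1/R)^(degree q - m)) * (cmod z ^ \<gamma> * cmod w ^ degree q)"
proof -
  define d where "d = degree q"
  have zp: "cmod z > 0" using z1 by linarith
  have wp: "cmod w > 0" using w R zp by (smt (verit) mult_pos_pos powr_gt_zero)
  have trm: "cmod (coeff (coeff q m) n) * (cmod z ^ n * cmod w ^ m)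
     \<le> cmod (coeff (coeff q m) n) * (1/R)^(d - m) * (cmod z ^ \<gamma> * cmod w ^ d)"
    if m: "m \<le> d" for m n
  proof (cases "coeff (coeff q m) n = 0")
    case True thus ?thesis by simp
  next
    case False
    have nle: "real n \<le> \<gamma> + \<alpha> * real (d - m)"
      using nb[OF False] al m unfolding d_def by (simp add: of_nat_diff algebra_simps)
    have "cmod z ^ n = cmod z powr real n" using zp by (simp add: powr_realpow)
    also have "\<dots> \<le> cmod z powr (\<gamma> + \<alpha> * real (d - m))" by (rule powr_mono[OF nle z1])
    also have "\<dots> = cmod z ^ \<gamma> * (cmod z powr \<alpha>) ^ (d - m)"
      using zp by (simp add: powr_add powr_realpow powr_power mult.commute)
    also have "\<dots> \<le> cmod z ^ \<gamma> * (cmod w / R) ^ (d - m)"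
    proof (intro mult_left_mono power_mono)
      show "cmod z powr \<alpha> \<le> cmod w / R" using w R by (simp add: field_simps)
    qed auto
    finally have zb: "cmod z ^ n \<le> cmod z ^ \<gamma> * (cmod w / R) ^ (d - m)" .
    have "cmod z ^ n * cmod w ^ m \<le> cmod z ^ \<gamma> * (cmod w / R) ^ (d - m) * cmod w ^ m"
      by (rule mult_right_mono[OF zb]) simp
    also have "\<dots> = (1/R)^(d-m) * (cmod z ^ \<gamma> * cmod w ^ d)"
    proof -
      have "cmod w ^ (d - m) * cmod w ^ m = cmod w ^ d" using m by (simp add: power_add[symmetric])
      thus ?thesis by (simp add: power_divide field_simps)
    qed
    finally show ?thesis by (simp add: mult_left_mono mult.assoc)
  qed
  have "cmod (qeval q z w) \<le> (\<Sum>m\<le>d. \<Sum>n\<le>degree (coeff q m).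
      cmod (coeff (coeff q m) n) * (1/R)^(d - m) * (cmod z ^ \<gamma> * cmod w ^ d))"
    unfolding d_def by (rule order.trans[OF qeval_norm], intro sum_mono) (use trm in \<open>auto simp: d_def\<close>)
  also have "\<dots> = (\<Sum>m\<le>d. \<Sum>n\<le>degree (coeff q m).
      cmod (coeff (coeff q m) n) * (1/R)^(d - m)) * (cmod z ^ \<gamma> * cmod w ^ d)"
    by (simp add: sum_distrib_right)
  finally show ?thesis unfolding d_def .
qed


lemma fmap_iter: "(fmap p q ^^ n) (z, w) = ((poly p ^^ n) z, Qiter p q n z w)"
  by (induction n) (auto simp: fmap_def)

lemma logplus_mono: "0 \<le> x \<Longrightarrow> x \<le> y \<Longrightarrow> logplus x \<le> logplus y"
  unfolding logplus_def by (cases "x = 0") (auto intro: max.coboundedI2)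

lemma logplus_nonneg: "logplus x \<ge> 0" unfolding logplus_def by simp

lemma logplus_max: assumes "0 \<le> a" "0 \<le> b" shows "logplus (max a b) = max (logplus a) (logplus b)"
proof (cases "a \<le> b")
  case True thus ?thesis using logplus_mono[of a b] \<open>0 \<le> a\<close> by (simp add: max_def)
next
  case False thus ?thesis using logplus_mono[of b a] \<open>0 \<le> b\<close> by (simp add: max_def)
qed

lemma ln_max1: "0 \<le> x \<Longrightarrow> ln (max 1 x) = logplus x"
  unfolding logplus_def by (cases "x = 0") (auto simp: max_def)

lemma logplus_ge1: "x \<ge> 1 \<Longrightarrow> logplus x = ln x"
  unfolding logplus_def by simp

lemma escape_norm:
  assumes "z \<in> escape_set p" shows "\<exists>M. \<forall>n\<ge>M. cmod ((poly p ^^ n) z) \<ge> B"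
proof -
  have "filterlim (\<lambda>n. cmod ((poly p ^^ n) z)) at_top sequentially"
    using assms unfolding escape_set_def by (auto intro: filterlim_at_infinity_imp_norm_at_top)
  hence "eventually (\<lambda>n. B \<le> cmod ((poly p ^^ n) z)) sequentially"
    by (simp add: filterlim_at_top)
  thus ?thesis by (simp add: eventually_sequentially)
qed

lemma bounded_not_escape:
  assumes "\<And>k. cmod ((poly p ^^ k) x) \<le> B" shows "x \<notin> escape_set p"
proof
  assume "x \<in> escape_set p"
  then obtain M where "\<forall>n\<ge>M. cmod ((poly p ^^ n) x) \<ge> B + 1" using escape_norm by blast
  with assms[of M] show False by auto
qed

lemma escape_if_big:
  fixes p :: "complex poly"
  assumes dg: "degree p \<ge> 2" and R1: "R1 \<ge> 4"
    and H: "\<And>x. cmod x \<ge> R1 \<Longrightarrow> cmod x ^ degree p / 2 \<le> cmod (poly p x)"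
    and big: "cmod ((poly p ^^ k) z) \<ge> R1"
  shows "z \<in> escape_set p"
proof -
  have grow: "cmod ((poly p ^^ (j + k)) z) \<ge> 2^j * R1" for j
  proof (induction j)
    case 0 thus ?case using big by simp
  next
    case (Suc j)
    have x: "cmod ((poly p ^^ (j + k)) z) \<ge> R1" using Suc R1
      by (smt (verit) one_le_power mult_le_cancel_right1)
    have "cmod ((poly p ^^ (Suc j + k)) z) = cmod (poly p ((poly p ^^ (j + k)) z))" by simp
    also have "\<dots> \<ge> 2 * cmod ((poly p ^^ (j + k)) z)"
      by (rule p_double[OF dg R1 x H[OF x]])
    finally show ?case using Suc by simp
  qed
  have "filterlim (\<lambda>n. cmod ((poly p ^^ n) z)) at_top sequentially"
    unfolding filterlim_at_top
  proof
    fix Y :: real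
    obtain j where j: "Y < 2^j" using real_arch_pow[of 2 Y] by auto
    have "cmod ((poly p ^^ n) z) \<ge> Y" if "n \<ge> j + k" for n
    proof -
      have "2^j \<le> (2::real)^(n - k)" using that by (intro power_increasing) auto
      also have "(2::real)^(n-k) \<le> 2^(n-k) * R1" using R1 by (simp add: mult_le_cancel_left1)
      also have "\<dots> \<le> cmod ((poly p ^^ n) z)" using grow[of "n-k"] that by simp
      finally show ?thesis using j by simp
    qed
    thus "eventually (\<lambda>n. Y \<le> cmod ((poly p ^^ n) z)) sequentially"
      unfolding eventually_sequentially by blast
  qed
  thus ?thesis unfolding escape_set_def by (simp add: filterlim_at_infinity_conv_norm_at_top)
qed


lemma max_div: "(c::real) > 0 \<Longrightarrow> max a b / c = max (a/c) (b/c)"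
  by (auto simp: max_def divide_le_cancel)

theorem corollary4p10:
  fixes p :: "complex poly" and q :: "complex poly poly" and R :: real
  assumes p_monic: "lead_coeff p = 1" and delta_ge: "degree p \<ge> 2"
    and d_ge: "degree q \<ge> 2"
    and b_monic: "lead_coeff (lead_coeff q) = 1"
    and delta_gt_d: "degree p > degree q"
    and alpha_eq: "alpha_exp p q = real (degree (lead_coeff q)) / (real (degree p) - real (degree q))"
    and not_prod: "\<not> poly_product q"
    and R_inv: "fmap p q ` W_set (alpha_exp p q) R \<subseteq> W_set (alpha_exp p q) R"
    and R_esc: "W_set (alpha_exp p q) R \<subseteq> escape_set p \<times> UNIV"
    and zw: "(z, w) \<notin> B_f p q R"
  shows "((\<lambda>n. logplus (cmod (Qiter p q n z w)) / real (degree p) ^ n)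
            \<longlonglongrightarrow> alpha_exp p q * Green_p p z)
       \<and> ((\<lambda>n. logplus (maxnorm ((fmap p q ^^ n) (z, w))) / real (degree p) ^ n)
            \<longlonglongrightarrow> max (alpha_exp p q) 1 * Green_p p z)"
proof -
  define \<delta> where "\<delta> = degree p"
  define d where "d = degree q"
  define \<gamma> where "\<gamma> = degree (lead_coeff q)"
  define \<alpha> where "\<alpha> = alpha_exp p q"
  define zn where "zn n = (poly p ^^ n) z" for n
  define wn where "wn n = Qiter p q n z w" for n
  have zS: "zn (Suc n) = poly p (zn n)" for n by (simp add: zn_def)
  have wS: "wn (Suc n) = qeval q (zn n) (wn n)" for n by (simp add: zn_def wn_def)
  have F: "(fmap p q ^^ n) (z,w) = (zn n, wn n)" for n by (simp add: fmap_iter zn_def wn_def)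
  have dd: "real d < real \<delta>" "\<delta> \<ge> 2" "d \<ge> 2"
    using delta_gt_d delta_ge d_ge by (auto simp: \<delta>_def d_def)
  have al: "\<alpha> * (real \<delta> - real d) = real \<gamma>"
    using alpha_eq dd by (simp add: \<alpha>_def \<gamma>_def \<delta>_def d_def)
  have a0: "\<alpha> \<ge> 0" using alpha_eq dd by (simp add: \<alpha>_def \<delta>_def d_def)
  obtain R1 where R1: "R1 \<ge> 4" and H: "\<And>x. cmod x \<ge> R1 \<Longrightarrow>
      cmod x ^ \<delta> / 2 \<le> cmod (poly p x) \<and> cmod (poly p x) \<le> 2 * cmod x ^ \<delta>"
    using p_growth[OF p_monic delta_ge] unfolding \<delta>_def by metis
  have dpos: "real \<delta> > 1" using dd by simp
  have key: "\<exists>G\<ge>0. (\<lambda>n. logplus (cmod (zn n)) / real \<delta> ^ n) \<longlonglongrightarrow> G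
        \<and> (\<lambda>n. logplus (cmod (wn n)) / real \<delta> ^ n) \<longlonglongrightarrow> \<alpha> * G"
  proof (cases "z \<in> escape_set p")
    case False
    have zb: "cmod (zn k) \<le> R1" for k
    proof (rule ccontr)
      assume "\<not> cmod (zn k) \<le> R1"
      hence "z \<in> escape_set p"
        using escape_if_big[OF delta_ge R1, of k z] H unfolding zn_def \<delta>_def by auto
      with False show False by simp
    qed
    have Gz0: "(\<lambda>n. logplus (cmod (zn n)) / real \<delta> ^ n) \<longlonglongrightarrow> 0"
      by (rule squeeze_zero[where L=0 and d=1 and A="logplus R1"])
         (use dpos zb in \<open>auto simp: logplus_nonneg logplus_mono\<close>)
    obtain B where B1: "B \<ge> 1" and qb: "\<And>z w. cmod z \<le> R1 \<Longrightarrow> cmod (qeval q z w) \<le> B * (max 1 (cmod w)) ^ degree q"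
      using q_bound_bounded[of R1 q] R1 by auto
    define t where "t n = logplus (cmod (wn n))" for n
    have rec: "t (Suc n) \<le> ln B + real d * t n" for n
    proof -
      define M where "M = max 1 (cmod (wn n))"
      have M1: "M \<ge> 1" by (simp add: M_def)
      have BM: "B * M ^ d \<ge> 1" using B1 M1 by (simp add: one_le_power order_trans[OF _ mult_mono[of 1 B 1 "M^d"]])
      have "t (Suc n) \<le> logplus (B * M ^ d)"
        unfolding t_def wS M_def d_def by (rule logplus_mono) (use qb zb in auto)
      also have "\<dots> = ln B + real d * ln M"
        using B1 M1 BM by (simp add: logplus_ge1 ln_mult ln_realpow)
      also have "ln M = t n" unfolding M_def t_def by (simp add: ln_max1)
      finally show ?thesis .
    qed
    have tb: "t n \<le> real d ^ n * (\<bar>t 0\<bar> + ln B)" for n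
    proof -
      have "t n \<le> real d ^ n * (\<bar>t 0\<bar> + ln B) - ln B"
        using rec_bound[of "ln B" "real d" t n] rec dd B1 by auto
      moreover have "ln B \<ge> 0" using B1 by simp
      ultimately show ?thesis by linarith
    qed
    have Gw0: "(\<lambda>n. t n / real \<delta> ^ n) \<longlonglongrightarrow> 0"
      by (rule squeeze_zero[where L=0 and d="real d" and A="\<bar>t 0\<bar> + ln B"])
         (use dpos dd tb in \<open>auto simp: t_def logplus_nonneg\<close>)
    show ?thesis using Gz0 Gw0 unfolding t_def by (intro exI[of _ 0]) auto
  next
    case True
    have "(z,w) \<in> A_f p q R" using zw True unfolding B_f_def by auto
    then obtain N where FN: "(fmap p q ^^ N) (z,w) \<in> W_set \<alpha> R" unfolding A_f_def \<alpha>_def by auto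
    have Rpos: "R > 0"
    proof (rule ccontr)
      assume nR: "\<not> R > 0"
      obtain x0 where x0: "x0 \<noteq> 0" "\<forall>k. cmod ((poly p ^^ k) x0) \<le> cmod x0"
        using nonzero_bounded_orbit[OF delta_ge] by blast
      have "R * cmod x0 powr \<alpha> \<le> 0" using nR by (intro mult_nonpos_nonneg) auto
      moreover have "R < cmod x0" using nR x0(1) by (smt (verit) zero_less_norm_iff)
      ultimately have "(x0, 1) \<in> W_set \<alpha> R" unfolding W_set_def by auto
      hence "x0 \<in> escape_set p" using R_esc unfolding \<alpha>_def by auto
      with bounded_not_escape[of p x0 "cmod x0"] x0(2) show False by blast
    qed
    have inW: "(zn (N+k), wn (N+k)) \<in> W_set \<alpha> R" for k
    proof (induction k)
      case 0 thus ?case using FN F by simp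
    next
      case (Suc k)
      have "(zn (N + Suc k), wn (N + Suc k)) = fmap p q (zn (N+k), wn (N+k))"
        by (simp add: zS wS fmap_def)
      thus ?case using R_inv Suc unfolding \<alpha>_def by auto
    qed
    have Wn: "cmod (zn n) > R \<and> cmod (wn n) > R * cmod (zn n) powr \<alpha>" if "n \<ge> N" for n
      using inW[of "n - N"] that unfolding W_set_def by auto
    obtain M0 where M0: "\<forall>n\<ge>M0. cmod (zn n) \<ge> R1"
      using escape_norm[OF True] unfolding zn_def by blast
    define M where "M = max M0 N"
    have zbig: "cmod (zn n) \<ge> R1" if "n \<ge> M" for n using M0 that by (auto simp: M_def)
    have WM: "cmod (wn n) > R * cmod (zn n) powr \<alpha>" if "n \<ge> M" for n
      using Wn that by (auto simp: M_def)
    have z1: "cmod (zn n) \<ge> 1" if "n \<ge> M" for n using zbig[OF that] R1 by linarith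
    have wp: "cmod (wn n) > 0" if "n \<ge> M" for n
    proof -
      have "cmod (zn n) powr \<alpha> > 0" using z1[OF that] by (simp add: powr_gt_zero) (metis norm_zero not_one_le_zero)
      hence "R * cmod (zn n) powr \<alpha> > 0" using Rpos by simp
      thus ?thesis using WM[OF that] by linarith
    qed
    define a where "a k = ln (cmod (zn (M+k)))" for k
    have arec: "\<bar>a (Suc k) - real \<delta> * a k\<bar> \<le> ln 2" for k
    proof -
      define x where "x = zn (M+k)"
      have x: "cmod x \<ge> R1" "cmod x \<ge> 1" using zbig z1 by (auto simp: x_def)
      have h: "cmod x ^ \<delta> / 2 \<le> cmod (poly p x)" "cmod (poly p x) \<le> 2 * cmod x ^ \<delta>"
        using H[OF x(1)] by auto
      have xpos: "cmod x > 0" using x by linarith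
      hence xp: "cmod x ^ \<delta> > 0" by (rule zero_less_power)
      have l1: "ln (cmod x ^ \<delta> / 2) \<le> ln (cmod (poly p x))"
        using h(1) xp by (subst ln_le_cancel_iff) auto
      have l2: "ln (cmod (poly p x)) \<le> ln (2 * cmod x ^ \<delta>)"
        using h xp by (subst ln_le_cancel_iff) auto
      have "a (Suc k) - real \<delta> * a k = ln (cmod (poly p x)) - real \<delta> * ln (cmod x)"
        by (simp add: a_def x_def zS)
      moreover have "ln (cmod x ^ \<delta> / 2) = real \<delta> * ln (cmod x) - ln 2"
        using xp xpos by (simp add: ln_div ln_realpow del: norm_power)
      moreover have "ln (2 * cmod x ^ \<delta>) = ln 2 + real \<delta> * ln (cmod x)"
        using xp xpos by (simp add: ln_mult ln_realpow del: norm_power)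
      ultimately show ?thesis using l1 l2 unfolding abs_le_iff by linarith
    qed
    obtain La where La: "(\<lambda>k. a k / real \<delta> ^ k) \<longlonglongrightarrow> La"
      using telescope_conv[of "real \<delta>" a "ln 2", OF dpos arec] unfolding convergent_def by blast
    define G where "G = La / real \<delta> ^ M"
    have Gz: "(\<lambda>n. logplus (cmod (zn n)) / real \<delta> ^ n) \<longlonglongrightarrow> G"
    proof (rule LIMSEQ_offset[where k=M])
      have "(\<lambda>n. logplus (cmod (zn (n + M))) / real \<delta> ^ (n + M)) = (\<lambda>n. (a n / real \<delta> ^ n) * (1 / real \<delta> ^ M))"
        using z1 by (auto simp: a_def logplus_ge1 power_add add.commute)
      moreover have "(\<lambda>n. (a n / real \<delta> ^ n) * (1 / real \<delta> ^ M)) \<longlonglongrightarrow> La * (1 / real \<delta> ^ M)"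
        by (intro tendsto_mult La tendsto_const)
      ultimately show "(\<lambda>n. logplus (cmod (zn (n + M))) / real \<delta> ^ (n + M)) \<longlonglongrightarrow> G"
        by (simp add: G_def)
    qed
    have G0: "G \<ge> 0"
      by (rule LIMSEQ_le_const[OF Gz]) (use dpos in \<open>auto simp: logplus_nonneg\<close>)
    have "real \<delta> ^ M > 0" using dpos by simp
    hence "La = G * real \<delta> ^ M" by (simp add: G_def)
    hence La0: "La \<ge> 0" using G0 by simp
    have nb: "real n \<le> \<alpha> * (real \<delta> - real m)" if c: "coeff (coeff q m) n \<noteq> 0" for m n
    proof -
      have "coeff q m \<noteq> 0" using c by auto
      hence md: "m \<le> d" unfolding d_def by (rule le_degree)
      define D where "D = (\<Sum>j\<le>degree q. degree (coeff q j))"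
      let ?S = "{real n / (real (degree p) - real m) | n m. coeff (coeff q m) n \<noteq> 0}"
      have "?S \<subseteq> (\<lambda>(n,m). real n / (real (degree p) - real m)) ` ({..D} \<times> {..degree q})"
      proof
        fix x assume "x \<in> ?S"
        then obtain n' m' where x: "x = real n' / (real (degree p) - real m')" and c': "coeff (coeff q m') n' \<noteq> 0"
          by blast
        have "coeff q m' \<noteq> 0" using c' by auto
        hence m': "m' \<le> degree q" by (rule le_degree)
        have "n' \<le> degree (coeff q m')" using c' by (rule le_degree)
        also have "\<dots> \<le> D" unfolding D_def by (rule member_le_sum) (use m' in auto)
        finally show "x \<in> (\<lambda>(n,m). real n / (real (degree p) - real m)) ` ({..D} \<times> {..degree q})"
          using x m' by force
      qed
      hence fin: "finite ?S" by (rule finite_subset) auto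
      have "real n / (real \<delta> - real m) \<le> \<alpha>"
        unfolding \<alpha>_def alpha_exp_def \<delta>_def by (rule Max_ge[OF fin]) (use c in blast)
      moreover have "real \<delta> - real m > 0" using md dd by linarith
      ultimately show ?thesis by (simp add: pos_divide_le_eq mult.commute)
    qed
    define K where "K = (\<Sum>m\<le>degree q. \<Sum>n\<le>degree (coeff q m).
      cmod (coeff (coeff q m) n) * (1/R)^(degree q - m))"
    define K' where "K' = max 1 K"
    have al': "\<alpha> * (real \<delta> - real (degree q)) = real \<gamma>" using al by (simp add: d_def)
    have qW: "cmod (wn (Suc n)) \<le> K' * (cmod (zn n) ^ \<gamma> * cmod (wn n) ^ d)" if n: "n \<ge> M" for n
    proof -
      have "cmod (wn (Suc n)) \<le> K * (cmod (zn n) ^ \<gamma> * cmod (wn n) ^ d)"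
        unfolding wS K_def d_def by (rule q_bound_W[OF Rpos z1[OF n] WM[OF n] al' nb])
      also have "\<dots> \<le> K' * (cmod (zn n) ^ \<gamma> * cmod (wn n) ^ d)"
        unfolding K'_def by (rule mult_right_mono) auto
      finally show ?thesis .
    qed
    define u where "u k = ln (cmod (wn (M+k)))" for k
    define e where "e k = u k - \<alpha> * a k" for k
    have urec: "u (Suc k) \<le> ln K' + real \<gamma> * a k + real d * u k" for k
    proof -
      define X where "X = cmod (zn (M+k))"
      define Y where "Y = cmod (wn (M+k))"
      have X: "X > 0" using z1[of "M+k"] unfolding X_def by linarith
      have Y: "Y > 0" using wp[of "M+k"] unfolding Y_def by simp
      have K1: "K' \<ge> 1" by (simp add: K'_def)
      have y: "cmod (wn (M + Suc k)) > 0" using wp[of "M + Suc k"] by simp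
      have "u (Suc k) \<le> ln (K' * (X ^ \<gamma> * Y ^ d))"
        unfolding u_def using qW[of "M+k"] y X Y K1 by (subst ln_le_cancel_iff) (auto simp: X_def Y_def)
      also have "\<dots> = ln K' + real \<gamma> * ln X + real d * ln Y"
        using X Y K1 by (simp add: ln_mult ln_realpow)
      finally show ?thesis by (simp add: a_def u_def X_def Y_def)
    qed
    have erec: "e (Suc k) \<le> (ln (max 1 K) + \<alpha> * ln 2) + real d * e k" for k
    proof -
      have alow: "a (Suc k) \<ge> real \<delta> * a k - ln 2" using arec[of k] by (simp add: abs_le_iff)
      have "\<alpha> * (real \<delta> * a k - ln 2) \<le> \<alpha> * a (Suc k)" by (rule mult_left_mono[OF alow a0])
      moreover have "real \<gamma> * a k = \<alpha> * (real \<delta> * a k) - \<alpha> * (real d * a k)"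
        using arg_cong[OF al, of "\<lambda>t. t * a k"] by (simp add: algebra_simps)
      moreover have "e (Suc k) = u (Suc k) - \<alpha> * a (Suc k)" "real d * e k = real d * u k - \<alpha> * (real d * a k)"
        by (simp_all add: e_def algebra_simps)
      moreover have "\<alpha> * (real \<delta> * a k - ln 2) = \<alpha> * (real \<delta> * a k) - \<alpha> * ln 2" by (simp add: algebra_simps)
      ultimately show ?thesis using urec[of k] unfolding K'_def by linarith
    qed
    have elow: "ln R \<le> e k" for k
    proof -
      define X where "X = cmod (zn (M+k))"
      have X: "X > 0" using z1[of "M+k"] unfolding X_def by linarith
      have "R * X powr \<alpha> > 0" using X Rpos by simp
      moreover have "R * X powr \<alpha> < cmod (wn (M+k))" using WM[of "M+k"] unfolding X_def by simp
      ultimately have "ln (R * X powr \<alpha>) < u k" unfolding u_def by (subst ln_less_cancel_iff) auto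
      moreover have "ln (R * X powr \<alpha>) = ln R + \<alpha> * a k"
        using X Rpos by (simp add: ln_mult a_def X_def)
      ultimately show ?thesis by (simp add: e_def)
    qed
    define c where "c = ln (max 1 K) + \<alpha> * ln 2"
    have c0: "c \<ge> 0" unfolding c_def using a0 by simp
    have eb: "e k \<le> real d ^ k * (\<bar>e 0\<bar> + c)" for k
    proof -
      have "e k \<le> real d ^ k * (\<bar>e 0\<bar> + c) - c"
        using rec_bound[of c "real d" e k] erec c0 dd unfolding c_def by auto
      thus ?thesis using c0 by linarith
    qed
    have e0: "(\<lambda>k. e k / real \<delta> ^ k) \<longlonglongrightarrow> 0"
      by (rule squeeze_zero[where L="ln R" and d="real d" and A="\<bar>e 0\<bar> + c"]) (use elow eb dd dpos in auto)
    have uc: "(\<lambda>k. e k / real \<delta> ^ k + \<alpha> * (a k / real \<delta> ^ k)) \<longlonglongrightarrow> 0 + \<alpha> * La"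
      by (intro tendsto_add e0 tendsto_mult tendsto_const La)
    have ueq: "u k / real \<delta> ^ k = e k / real \<delta> ^ k + \<alpha> * (a k / real \<delta> ^ k)" for k
      by (simp add: e_def diff_divide_distrib)
    have Gw: "(\<lambda>n. logplus (cmod (wn n)) / real \<delta> ^ n) \<longlonglongrightarrow> \<alpha> * G"
    proof (rule LIMSEQ_offset[where k=M])
      have dk: "real \<delta> ^ k > 0" for k using dpos by simp
      have "logplus (cmod (wn (n + M))) / real \<delta> ^ (n + M) = max 0 (u n / real \<delta> ^ n) * (1 / real \<delta> ^ M)" for n
      proof -
        have "logplus (cmod (wn (n + M))) / real \<delta> ^ (n + M) = (max 0 (u n) / real \<delta> ^ n) / real \<delta> ^ M"
          by (simp add: logplus_def u_def power_add add.commute)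
        also have "\<dots> = max 0 (u n / real \<delta> ^ n) * (1 / real \<delta> ^ M)"
          using max_div[OF dk[of n], of 0 "u n"] by simp
        finally show ?thesis .
      qed
      moreover have "(\<lambda>n. max 0 (u n / real \<delta> ^ n) * (1 / real \<delta> ^ M)) \<longlonglongrightarrow> max 0 (\<alpha> * La) * (1 / real \<delta> ^ M)"
        using uc unfolding ueq[symmetric] by (intro tendsto_mult tendsto_max tendsto_const) simp
      moreover have "max 0 (\<alpha> * La) * (1 / real \<delta> ^ M) = \<alpha> * G"
        using a0 La0 by (simp add: G_def)
      ultimately show "(\<lambda>n. logplus (cmod (wn (n + M))) / real \<delta> ^ (n + M)) \<longlonglongrightarrow> \<alpha> * G" by simp
    qed
    show ?thesis using G0 Gz Gw by blast
  qed
  then obtain G where G0: "G \<ge> 0" and Gz: "(\<lambda>n. logplus (cmod (zn n)) / real \<delta> ^ n) \<longlonglongrightarrow> G"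
      and Gw: "(\<lambda>n. logplus (cmod (wn n)) / real \<delta> ^ n) \<longlonglongrightarrow> \<alpha> * G" by blast
  have GG: "Green_p p z = G" using Gz unfolding Green_p_def zn_def \<delta>_def by (rule limI)
  have "(\<lambda>n. max (logplus (cmod (zn n)) / real \<delta> ^ n) (logplus (cmod (wn n)) / real \<delta> ^ n))
      \<longlonglongrightarrow> max G (\<alpha> * G)" by (intro tendsto_max Gz Gw)
  moreover have "max G (\<alpha> * G) = max \<alpha> 1 * G"
  proof (cases "\<alpha> \<le> 1")
    case True
    hence "\<alpha> * G \<le> 1 * G" using G0 by (intro mult_right_mono) auto
    thus ?thesis using True by (simp add: max_def)
  next
    case False
    hence "1 * G \<le> \<alpha> * G" using G0 by (intro mult_right_mono) auto
    thus ?thesis using False by (simp add: max_def)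
  qed
  moreover have "logplus (maxnorm ((fmap p q ^^ n) (z, w))) / real \<delta> ^ n
     = max (logplus (cmod (zn n)) / real \<delta> ^ n) (logplus (cmod (wn n)) / real \<delta> ^ n)" for n
    using dpos by (simp add: F maxnorm_def logplus_max max_div)
  ultimately show ?thesis using Gw GG
    unfolding \<delta>_def \<alpha>_def wn_def by simp
qed
end
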